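(* Consider the penalized scenario-based Value-at-Risk portfolio problem $\min_{\mathbf{w}\in\Delta}\ \phi(\mathbf{w}) := g(\mathbf{w}) - h(\mathbf{w})$ and the Boosted DC Algorithm (BDCA) with the line search, both as described in the context. Let $\{\mathbf{w}_k\}$ and $\{\mathbf{y}_k\}$ be the sequences generated by the BDCA, with $\mathbf{d}_k=\mathbf{y}_k-\mathbf{w}_k$ and step sizes $\lambda_k$. Then: (i) for all $k\ge 0$, $\phi(\mathbf{y}_k)\le \phi(\mathbf{w}_k)-\rho\,\|\mathbf{d}_k\|^2$; (ii) the line search (the choice of the initial $\lambda_k$ followed by the backtracking loop) terminates after finitely many steps, and $\phi(\mathbf{w}_{k+1})\le \phi(\mathbf{w}_k)-\rho\,\lambda_k^2\,\|\mathbf{d}_k\|^2$; (iii) the sequence $\{\phi(\mathbf{w}_k)\}$ is monotonically decreasing and converges to some $\bar\phi\in\mathbb{R}$; (iv) there exists a subsequence of $\{\mathbf{w}_k\}$ converging to a KKT point of the problem $\min_{\mathbf{w}\in\Delta}\phi(\mathbf{w})$.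
   Context: Data: $n,S\in\mathbb{N}$; scenario vectors $\mathbf{x}_1,\dots,\mathbf{x}_S\in\mathbb{R}^n$ with probabilities $p_1,\dots,p_S\in[0,1]$, $\sum_j p_j=1$. The feasible set is the simplex $\Delta=\{\mathbf{w}\in[0,1]^n:\sum_{i=1}^n w_i=1\}$. For $\mathbf{w}\in\mathbb{R}^n$ relabel the scenarios so that $\mathbf{w}^\top\mathbf{x}_1\le\cdots\le\mathbf{w}^\top\mathbf{x}_S$; for a level $a\in(0,1)$ let $k=\max\{k: \sum_{j=1}^k p_j< a\}$ (with $\max\emptyset=0$) and $\varepsilon=a-\sum_{j=1}^k p_j$, and define the discrete conditional value-at-risk $\mathrm{CVaR}_{X,a}(\mathbf{w})=\frac1a\sum_{j=1}^k p_j\,\mathbf{w}^\top\mathbf{x}_j+\frac{\varepsilon}{a}\,\mathbf{w}^\top\mathbf{x}_{k+1}$ (a concave piecewise linear function of $\mathbf{w}$). Fix $\alpha\in(0,1)$, with $k,\varepsilon$ the quantities above for level $\alpha$, a constant $\gamma$ with $0<\gamma<\varepsilon$, a threshold $r_{\min}\in\mathbb{R}$, a penalty parameter $\tau>0$, a regularization parameter $\rho>0$, and $\psi(\mathbf{w})=\frac{\rho}{2}\|\mathbf{w}\|^2$. Let $f(\mathbf{w})=-\sum_{j=1}^S p_j\,\mathbf{w}^\top\mathbf{x}_j$ and $g(\mathbf{w})=\psi(\mathbf{w})+f(\mathbf{w})+\tau\max\big[-\tfrac{\alpha}{\gamma}\mathrm{CVaR}_{X,\alpha}(\mathbf{w})+r_{\min},\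 -\tfrac{\alpha-\gamma}{\gamma}\mathrm{CVaR}_{X,\alpha-\gamma}(\mathbf{w})\big]$, $h(\mathbf{w})=\psi(\mathbf{w})-\tau\,\tfrac{\alpha-\gamma}{\gamma}\mathrm{CVaR}_{X,\alpha-\gamma}(\mathbf{w})$, and $\phi=g-h$ (both $g$ and $h$ are $\rho$-strongly convex). BDCA: input $\mathbf{w}_0\in\Delta$, $\tau,\rho>0$, $\beta\in(0,1)$. For $k=0,1,2,\dots$: choose $\mathbf{u}_k\in\partial h(\mathbf{w}_k)$ (convex subdifferential); let $\mathbf{y}_k=\arg\min_{\mathbf{w}\in\Delta}\{g(\mathbf{w})-\mathbf{w}^\top\mathbf{u}_k\}$ (unique by strong convexity); $\mathbf{d}_k=\mathbf{y}_k-\mathbf{w}_k$; if $\|\mathbf{d}_k\|=0$ stop; otherwise set $\lambda_k=\max\{\lambda: \mathbf{w}_k+\lambda\mathbf{d}_k\in\Delta\}$ and, while $\phi(\mathbf{w}_k+\lambda_k\mathbf{d}_k)>\phi(\mathbf{w}_k)-\rho\lambda_k^2\|\mathbf{d}_k\|^2$, replace $\lambda_k$ by $\max\{1,\beta\lambda_k\}$; then set $\mathbf{w}_{k+1}=\mathbf{w}_k+\lambda_k\mathbf{d}_k$. A point $\bar{\mathbf{w}}$ is a KKT point of $\min_{\mathbf{w}\in\Delta}\phi$ if there exist $\pi_1,\dots,\pi_n\ge0$ and $\nu\in\mathbb{R}$ with $\mathbf{0}\in\partial g(\bar{\mathbf{w}})-\partial h(\bar{\mathbf{w}})-\sum_{i=1}^n\pi_i\mathbf{e}_i+\nu\mathbf{1}_n$,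 $\pi_i\bar w_i=0$ and $\bar w_i\ge0$ for all $i$, and $\mathbf{1}_n^\top\bar{\mathbf{w}}=1$, where $\mathbf{e}_i$ are the standard basis vectors and $\mathbf{1}_n$ is the all-ones vector. *)

theory Defs
  imports "HOL-Analysis.Analysis"
begin

text \<open>Scenarios are indexed 0-based by j < S (paper: 1..S). Portfolio vectors live in real^'n.\<close>

definition port_simplex :: "(real^'n) set" where
  "port_simplex = {w. (\<forall>i. 0 \<le> w$i \<and> w$i \<le> 1) \<and> (\<Sum>i\<in>UNIV. w$i) = 1}"

definition sorting_perm :: "nat \<Rightarrow> (nat \<Rightarrow> real^'n) \<Rightarrow> real^'n \<Rightarrow> (nat \<Rightarrow> nat) \<Rightarrow> bool" where
  "sorting_perm S x w \<sigma> \<longleftrightarrow> bij_betw \<sigma> {..<S} {..<S} \<and>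
      (\<forall>i j. i \<le> j \<and> j < S \<longrightarrow> w \<bullet> x (\<sigma> i) \<le> w \<bullet> x (\<sigma> j))"

text \<open>k = max{k : sum of the first k relabelled probabilities < a} (k=0 always qualifies).\<close>
definition cut_index :: "nat \<Rightarrow> (nat \<Rightarrow> real) \<Rightarrow> (nat \<Rightarrow> nat) \<Rightarrow> real \<Rightarrow> nat" where
  "cut_index S p \<sigma> a = Max {k. k \<le> S \<and> (\<Sum>j<k. p (\<sigma> j)) < a}"

definition cut_eps :: "nat \<Rightarrow> (nat \<Rightarrow> real) \<Rightarrow> (nat \<Rightarrow> nat) \<Rightarrow> real \<Rightarrow> real" where
  "cut_eps S p \<sigma> a = a - (\<Sum>j<cut_index S p \<sigma> a. p (\<sigma> j))"

definition CVaR :: "nat \<Rightarrow> (nat \<Rightarrow> real^'n) \<Rightarrow> (nat \<Rightarrow> real) \<Rightarrow> real \<Rightarrow> real^'n \<Rightarrow> real" where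
  "CVaR S x p a w =
     (let \<sigma> = (SOME \<sigma>. sorting_perm S x w \<sigma>);
          k = cut_index S p \<sigma> a;
          e = cut_eps S p \<sigma> a
      in (1 / a) * (\<Sum>j<k. p (\<sigma> j) * (w \<bullet> x (\<sigma> j))) + (e / a) * (w \<bullet> x (\<sigma> k)))"

definition psi :: "real \<Rightarrow> real^'n \<Rightarrow> real" where
  "psi \<rho> w = \<rho> / 2 * (norm w)^2"

definition f_obj :: "nat \<Rightarrow> (nat \<Rightarrow> real^'n) \<Rightarrow> (nat \<Rightarrow> real) \<Rightarrow> real^'n \<Rightarrow> real" where
  "f_obj S x p w = - (\<Sum>j<S. p j * (w \<bullet> x j))"

definition g_dc :: "nat \<Rightarrow> (nat \<Rightarrow> real^'n) \<Rightarrow> (nat \<Rightarrow> real) \<Rightarrow> real \<Rightarrow> real \<Rightarrow> real \<Rightarrow> real \<Rightarrow> real \<Rightarrow> real^'n \<Rightarrow> real" where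
  "g_dc S x p \<alpha> \<gamma> rmin \<tau> \<rho> w =
     psi \<rho> w + f_obj S x p w
     + \<tau> * max (- (\<alpha> / \<gamma>) * CVaR S x p \<alpha> w + rmin)
                (- ((\<alpha> - \<gamma>) / \<gamma>) * CVaR S x p (\<alpha> - \<gamma>) w)"

definition h_dc :: "nat \<Rightarrow> (nat \<Rightarrow> real^'n) \<Rightarrow> (nat \<Rightarrow> real) \<Rightarrow> real \<Rightarrow> real \<Rightarrow> real \<Rightarrow> real \<Rightarrow> real^'n \<Rightarrow> real" where
  "h_dc S x p \<alpha> \<gamma> \<tau> \<rho> w = psi \<rho> w - \<tau> * ((\<alpha> - \<gamma>) / \<gamma>) * CVaR S x p (\<alpha> - \<gamma>) w"

definition subdiff :: "(real^'n \<Rightarrow> real) \<Rightarrow> real^'n \<Rightarrow> (real^'n) set" where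
  "subdiff F w = {u. \<forall>v. F w + u \<bullet> (v - w) \<le> F v}"

definition ls_init :: "real^'n \<Rightarrow> real^'n \<Rightarrow> real" where
  "ls_init w d = (GREATEST l. w + l *\<^sub>R d \<in> port_simplex)"

text \<open>Value of lambda after m backtracking steps lambda := max{1, beta*lambda}.\<close>
definition ls_iter :: "real \<Rightarrow> real \<Rightarrow> nat \<Rightarrow> real" where
  "ls_iter \<beta> l0 m = ((\<lambda>l. max 1 (\<beta> * l)) ^^ m) l0"

definition is_KKT :: "(real^'n \<Rightarrow> real) \<Rightarrow> (real^'n \<Rightarrow> real) \<Rightarrow> real^'n \<Rightarrow> bool" where
  "is_KKT G H wb \<longleftrightarrow> (\<exists>\<xi> \<zeta> (\<pi>::real^'n) (\<nu>::real).
      \<xi> \<in> subdiff G wb \<and> \<zeta> \<in> subdiff H wb \<and>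
      \<xi> - \<zeta> - \<pi> + \<nu> *\<^sub>R (\<chi> i. 1) = 0 \<and>
      (\<forall>i. 0 \<le> \<pi>$i \<and> \<pi>$i * wb$i = 0 \<and> 0 \<le> wb$i) \<and>
      (\<Sum>i\<in>UNIV. wb$i) = 1)"

end

theory Submission
  imports Defs
begin


lemma sorting_exists: "\<exists>\<sigma>. sorting_perm S x v \<sigma>"
proof -
  define l where "l = sort_key (\<lambda>j. v \<bullet> x j) [0..<S]"
  have d: "distinct l" and sl: "set l = {..<S}" and ll: "length l = S"
    by (auto simp: l_def)
  have b: "bij_betw ((!) l) {..<S} {..<S}"
    using bij_betw_nth[OF d] sl ll by auto
  have so: "sorted (map (\<lambda>j. v \<bullet> x j) l)" by (simp add: l_def sorted_sort_key)
  have "\<forall>i j. i \<le> j \<and> j < S \<longrightarrow> v \<bullet> x (l ! i) \<le> v \<bullet> x (l ! j)"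
  proof (intro allI impI)
    fix i j assume "i \<le> j \<and> j < S"
    then show "v \<bullet> x (l ! i) \<le> v \<bullet> x (l ! j)"
      using sorted_nth_mono[OF so, of i j] ll by auto
  qed
  then show ?thesis using b unfolding sorting_perm_def by blast
qed



locale cv =
  fixes S :: nat and x :: "nat \<Rightarrow> real^'n" and p :: "nat \<Rightarrow> real"
  assumes p0: "\<forall>j<S. 0 \<le> p j" and p1: "\<forall>j<S. p j \<le> 1" and ps: "(\<Sum>j<S. p j) = 1"
begin

definition Qw :: "(nat \<Rightarrow> nat) \<Rightarrow> real \<Rightarrow> nat \<Rightarrow> real" where
  "Qw \<sigma> a j = (if j < cut_index S p \<sigma> a then p (\<sigma> j)
      else if j = cut_index S p \<sigma> a then cut_eps S p \<sigma> a else 0)"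

definition Lin :: "(nat \<Rightarrow> nat) \<Rightarrow> real \<Rightarrow> real^'n \<Rightarrow> real" where
  "Lin \<sigma> a v = (1/a) * (\<Sum>j<S. Qw \<sigma> a j * (v \<bullet> x (\<sigma> j)))"

definition grad :: "(nat \<Rightarrow> nat) \<Rightarrow> real \<Rightarrow> real^'n" where
  "grad \<sigma> a = (1/a) *\<^sub>R (\<Sum>j<S. Qw \<sigma> a j *\<^sub>R x (\<sigma> j))"

lemma cut_props:
  assumes b: "bij_betw \<sigma> {..<S} {..<S}" and a: "0 < a" "a < 1"
  shows "cut_index S p \<sigma> a < S" "(\<Sum>j<cut_index S p \<sigma> a. p (\<sigma> j)) < a"
        "a \<le> (\<Sum>j<Suc (cut_index S p \<sigma> a). p (\<sigma> j))"
proof -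
  define K where "K = {k. k \<le> S \<and> (\<Sum>j<k. p (\<sigma> j)) < a}"
  have fK: "finite K" unfolding K_def by (rule finite_subset[of _ "{..S}"]) auto
  have K0: "0 \<in> K" using a unfolding K_def by auto
  have ci: "cut_index S p \<sigma> a = Max K" unfolding K_def cut_index_def by simp
  have mK: "Max K \<in> K" using fK K0 Max_in by blast
  have tot: "(\<Sum>j<S. p (\<sigma> j)) = 1" using sum.reindex_bij_betw[OF b, of p] ps by simp
  have "Max K \<noteq> S" proof assume "Max K = S" then show False using mK tot a unfolding K_def by auto qed
  then show k: "cut_index S p \<sigma> a < S" using mK ci unfolding K_def by auto
  show "(\<Sum>j<cut_index S p \<sigma> a. p (\<sigma> j)) < a" using mK ci unfolding K_def by auto
  have "Suc (Max K) \<notin> K" using Max_ge[OF fK] by fastforce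
  then show "a \<le> (\<Sum>j<Suc (cut_index S p \<sigma> a). p (\<sigma> j))" using k ci unfolding K_def by auto
qed

lemma eps_props:
  assumes b: "bij_betw \<sigma> {..<S} {..<S}" and a: "0 < a" "a < 1"
  shows "0 < cut_eps S p \<sigma> a" "cut_eps S p \<sigma> a \<le> p (\<sigma> (cut_index S p \<sigma> a))"
  using cut_props[OF assms] unfolding cut_eps_def by auto

lemma Qw_sum:
  "(\<Sum>j<m. Qw \<sigma> a j * c j) = (if m \<le> cut_index S p \<sigma> a then (\<Sum>j<m. p (\<sigma> j) * c j)
     else (\<Sum>j<cut_index S p \<sigma> a. p (\<sigma> j) * c j) + cut_eps S p \<sigma> a * c (cut_index S p \<sigma> a))"
proof (induction m)
  case 0 then show ?case by simp
next
  case (Suc m)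
  show ?case
  proof (cases "Suc m \<le> cut_index S p \<sigma> a")
    case True then show ?thesis using Suc by (simp add: Qw_def)
  next
    case False
    then consider "m = cut_index S p \<sigma> a" | "m > cut_index S p \<sigma> a" by linarith
    then show ?thesis
    proof cases
      case 1 then show ?thesis using Suc by (simp add: Qw_def)
    next
      case 2 then show ?thesis using Suc by (simp add: Qw_def)
    qed
  qed
qed

lemma Qw_props:
  assumes b: "bij_betw \<sigma> {..<S} {..<S}" and a: "0 < a" "a < 1"
  shows "\<And>j. j < S \<Longrightarrow> 0 \<le> Qw \<sigma> a j" "\<And>j. j < S \<Longrightarrow> Qw \<sigma> a j \<le> p (\<sigma> j)"
    "(\<Sum>j<S. Qw \<sigma> a j) = a"
proof -
  have sj: "\<And>j. j < S \<Longrightarrow> \<sigma> j < S" using b by (auto simp: bij_betw_def)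
  fix j assume j: "j < S"
  show "0 \<le> Qw \<sigma> a j" using eps_props[OF assms] p0 sj[OF j] by (auto simp: Qw_def)
  show "Qw \<sigma> a j \<le> p (\<sigma> j)" using eps_props[OF assms] p0 sj[OF j] by (auto simp: Qw_def)
next
  have "(\<Sum>j<S. Qw \<sigma> a j * 1) = a"
    using Qw_sum[where m=S and \<sigma>=\<sigma> and a=a and c="\<lambda>_. 1"] cut_props[OF assms] by (simp add: cut_eps_def)
  then show "(\<Sum>j<S. Qw \<sigma> a j) = a" by simp
qed

lemma greedy:
  fixes c Q R P :: "nat \<Rightarrow> real" and k :: nat
  assumes mono: "\<And>i j. i \<le> j \<Longrightarrow> j < S \<Longrightarrow> c i \<le> c j" and k: "k < S"
    and Qlt: "\<And>j. j < k \<Longrightarrow> Q j = P j" and Qgt: "\<And>j. k < j \<Longrightarrow> j < S \<Longrightarrow> Q j = 0"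
    and R: "\<And>j. j < S \<Longrightarrow> 0 \<le> R j \<and> R j \<le> P j"
    and sums: "(\<Sum>j<S. R j) = (\<Sum>j<S. Q j)"
  shows "(\<Sum>j<S. Q j * c j) \<le> (\<Sum>j<S. R j * c j)"
proof -
  have t: "(R j - Q j) * c k \<le> (R j - Q j) * c j" if j: "j < S" for j
  proof -
    consider "j < k" | "j = k" | "k < j" by linarith
    then show ?thesis
    proof cases
      case 1
      then have "R j - Q j \<le> 0" "c j \<le> c k" using Qlt R j mono k by auto
      then show ?thesis by (simp add: mult_left_mono_neg)
    next
      case 2 then show ?thesis by simp
    next
      case 3
      then have "R j - Q j \<ge> 0" "c k \<le> c j" using Qgt R j mono k by auto
      then show ?thesis by (simp add: mult_left_mono)
    qed
  qed
  have "(\<Sum>j<S. (R j - Q j) * c k) \<le> (\<Sum>j<S. (R j - Q j) * c j)"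
    by (rule sum_mono) (use t in auto)
  moreover have "(\<Sum>j<S. (R j - Q j) * c k) = 0"
    using sums by (simp add: sum_distrib_right[symmetric] sum_subtractf)
  ultimately show ?thesis by (simp add: algebra_simps sum_subtractf)
qed

end


context cv begin

lemma Lin_le:
  assumes so: "sorting_perm S x v \<sigma>" and bt: "bij_betw \<tau> {..<S} {..<S}" and a: "0 < a" "a < 1"
  shows "Lin \<sigma> a v \<le> Lin \<tau> a v"
proof -
  have bs: "bij_betw \<sigma> {..<S} {..<S}" and mono: "\<And>i j. i \<le> j \<Longrightarrow> j < S \<Longrightarrow> v \<bullet> x (\<sigma> i) \<le> v \<bullet> x (\<sigma> j)"
    using so unfolding sorting_perm_def by auto
  define inv where "inv = the_inv_into {..<S} \<tau>"
  define q where "q i = Qw \<tau> a (inv i)" for i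
  have it: "inj_on \<tau> {..<S}" and im: "\<tau> ` {..<S} = {..<S}" using bt by (auto simp: bij_betw_def)
  have ss: "\<And>j. j < S \<Longrightarrow> \<sigma> j < S" using bs by (auto simp: bij_betw_def)
  have qt: "q (\<tau> j) = Qw \<tau> a j" if "j < S" for j
    using the_inv_into_f_f[OF it] that by (simp add: q_def inv_def)
  have inv_in: "inv i < S" if "i < S" for i
    using the_inv_into_into[OF it, of i "{..<S}"] im that by (auto simp: inv_def)
  have tinv: "\<tau> (inv i) = i" if "i < S" for i
    using f_the_inv_into_f[OF it, of i] im that by (auto simp: inv_def)
  have e1: "(\<Sum>j<S. Qw \<tau> a j * (v \<bullet> x (\<tau> j))) = (\<Sum>i<S. q i * (v \<bullet> x i))"
  proof -
    have "(\<Sum>j<S. Qw \<tau> a j * (v \<bullet> x (\<tau> j))) = (\<Sum>j<S. q (\<tau> j) * (v \<bullet> x (\<tau> j)))"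
      by (rule sum.cong) (auto simp: qt)
    also have "\<dots> = (\<Sum>i<S. q i * (v \<bullet> x i))"
      using sum.reindex_bij_betw[OF bt, of "\<lambda>i. q i * (v \<bullet> x i)"] by simp
    finally show ?thesis .
  qed
  have e2: "(\<Sum>i<S. q i * (v \<bullet> x i)) = (\<Sum>j<S. q (\<sigma> j) * (v \<bullet> x (\<sigma> j)))"
    using sum.reindex_bij_betw[OF bs, of "\<lambda>i. q i * (v \<bullet> x i)"] by simp
  have sq1: "(\<Sum>j<S. q (\<tau> j)) = (\<Sum>i<S. q i)"
    using sum.reindex_bij_betw[OF bt, of q] by simp
  have sq2: "(\<Sum>j<S. q (\<sigma> j)) = (\<Sum>i<S. q i)"
    using sum.reindex_bij_betw[OF bs, of q] by simp
  have sqa: "(\<Sum>j<S. q (\<tau> j)) = a"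
    using Qw_props(3)[OF bt a] by (simp add: qt)
  have R: "0 \<le> q (\<sigma> j) \<and> q (\<sigma> j) \<le> p (\<sigma> j)" if j: "j < S" for j
  proof -
    have m: "inv (\<sigma> j) < S" using inv_in ss j by auto
    have "q (\<sigma> j) = Qw \<tau> a (inv (\<sigma> j))" by (simp add: q_def)
    moreover have "\<tau> (inv (\<sigma> j)) = \<sigma> j" using tinv ss j by auto
    ultimately show ?thesis using Qw_props(1,2)[OF bt a m] by auto
  qed
  have "(\<Sum>j<S. Qw \<sigma> a j * (v \<bullet> x (\<sigma> j))) \<le> (\<Sum>j<S. q (\<sigma> j) * (v \<bullet> x (\<sigma> j)))"
  proof (rule greedy[where k="cut_index S p \<sigma> a" and P="\<lambda>j. p (\<sigma> j)"])
    show "\<And>i j. i \<le> j \<Longrightarrow> j < S \<Longrightarrow> v \<bullet> x (\<sigma> i) \<le> v \<bullet> x (\<sigma> j)" by (rule mono)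
    show "cut_index S p \<sigma> a < S" using cut_props[OF bs a] by simp
    show "\<And>j. j < cut_index S p \<sigma> a \<Longrightarrow> Qw \<sigma> a j = p (\<sigma> j)" by (simp add: Qw_def)
    show "\<And>j. cut_index S p \<sigma> a < j \<Longrightarrow> j < S \<Longrightarrow> Qw \<sigma> a j = 0" by (simp add: Qw_def)
    show "\<And>j. j < S \<Longrightarrow> 0 \<le> q (\<sigma> j) \<and> q (\<sigma> j) \<le> p (\<sigma> j)" by (rule R)
    show "(\<Sum>j<S. q (\<sigma> j)) = (\<Sum>j<S. Qw \<sigma> a j)" using sq1 sq2 sqa Qw_props(3)[OF bs a] by simp
  qed
  then have "(\<Sum>j<S. Qw \<sigma> a j * (v \<bullet> x (\<sigma> j))) \<le> (\<Sum>j<S. Qw \<tau> a j * (v \<bullet> x (\<tau> j)))"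
    using e1 e2 by simp
  then show ?thesis unfolding Lin_def using a by (simp add: divide_right_mono)
qed

definition sp :: "real^'n \<Rightarrow> nat \<Rightarrow> nat" where
  "sp v = (SOME \<sigma>. sorting_perm S x v \<sigma>)"

lemma sp_sorting: "sorting_perm S x v (sp v)"
  unfolding sp_def using sorting_exists someI_ex by metis

lemma sp_bij: "bij_betw (sp v) {..<S} {..<S}"
  using sp_sorting unfolding sorting_perm_def by auto

lemma CVaR_eq:
  assumes a: "0 < a" "a < 1"
  shows "CVaR S x p a v = Lin (sp v) a v"
proof -
  have "(\<Sum>j<S. Qw (sp v) a j * (v \<bullet> x (sp v j))) = (\<Sum>j<cut_index S p (sp v) a. p (sp v j) * (v \<bullet> x (sp v j))) +
      cut_eps S p (sp v) a * (v \<bullet> x (sp v (cut_index S p (sp v) a)))"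
    using Qw_sum[where m=S and \<sigma>="sp v" and a=a and c="\<lambda>j. v \<bullet> x (sp v j)"] cut_props(1)[OF sp_bij a, of v] by simp
  then show ?thesis unfolding CVaR_def Let_def sp_def[symmetric] Lin_def
    by (simp add: algebra_simps add_divide_distrib)
qed

lemma CVaR_le:
  assumes "bij_betw \<tau> {..<S} {..<S}" "0 < a" "a < 1"
  shows "CVaR S x p a v \<le> Lin \<tau> a v"
  using CVaR_eq[OF assms(2,3)] Lin_le[OF sp_sorting assms] by simp

lemma Lin_inner: "Lin \<tau> a v = v \<bullet> grad \<tau> a"
  unfolding Lin_def grad_def by (simp add: inner_sum_right sum_distrib_left)

lemma grad_norm:
  assumes b: "bij_betw \<tau> {..<S} {..<S}" and a: "0 < a" "a < 1"
  shows "norm (grad \<tau> a) \<le> (\<Sum>i<S. norm (x i)) / a"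
proof -
  have "norm (\<Sum>j<S. Qw \<tau> a j *\<^sub>R x (\<tau> j)) \<le> (\<Sum>j<S. norm (Qw \<tau> a j *\<^sub>R x (\<tau> j)))"
    by (rule norm_sum)
  also have "\<dots> \<le> (\<Sum>j<S. norm (x (\<tau> j)))"
  proof (rule sum_mono)
    fix j assume "j \<in> {..<S}"
    then have j: "j < S" by simp
    have t: "\<tau> j < S" using b j by (auto simp: bij_betw_def)
    have "0 \<le> Qw \<tau> a j" "Qw \<tau> a j \<le> 1" using Qw_props(1,2)[OF b a j] p1 t by auto
    then show "norm (Qw \<tau> a j *\<^sub>R x (\<tau> j)) \<le> norm (x (\<tau> j))"
      by (simp add: mult_left_le_one_le)
  qed
  also have "\<dots> = (\<Sum>i<S. norm (x i))" using sum.reindex_bij_betw[OF b, of "\<lambda>i. norm (x i)"] by simp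
  finally show ?thesis unfolding grad_def using a by (simp add: divide_right_mono)
qed

lemma CVaR_concave:
  assumes a: "0 < a" "a < 1" and t: "0 \<le> t" "t \<le> 1"
  shows "(1 - t) * CVaR S x p a v + t * CVaR S x p a w \<le> CVaR S x p a ((1 - t) *\<^sub>R v + t *\<^sub>R w)"
proof -
  define z where "z = (1 - t) *\<^sub>R v + t *\<^sub>R w"
  have "CVaR S x p a v \<le> Lin (sp z) a v" "CVaR S x p a w \<le> Lin (sp z) a w"
    using CVaR_le[OF sp_bij a] by auto
  then have "(1 - t) * CVaR S x p a v + t * CVaR S x p a w \<le> (1 - t) * Lin (sp z) a v + t * Lin (sp z) a w"
    using t by (intro add_mono mult_left_mono) auto
  also have "\<dots> = Lin (sp z) a z" unfolding Lin_inner z_def by (simp add: inner_add_left)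
  also have "\<dots> = CVaR S x p a z" using CVaR_eq[OF a] by simp
  finally show ?thesis unfolding z_def .
qed

lemma CVaR_super:
  assumes a: "0 < a" "a < 1"
  shows "CVaR S x p a v \<le> CVaR S x p a w + grad (sp w) a \<bullet> (v - w)"
proof -
  have "CVaR S x p a v \<le> Lin (sp w) a v" using CVaR_le[OF sp_bij a] by auto
  also have "\<dots> = Lin (sp w) a w + grad (sp w) a \<bullet> (v - w)"
    unfolding Lin_inner by (simp add: inner_diff_right inner_commute[of _ "grad (sp w) a"])
  also have "Lin (sp w) a w = CVaR S x p a w" using CVaR_eq[OF a] by simp
  finally show ?thesis .
qed

lemma CVaR_lip:
  assumes a: "0 < a" "a < 1"
  shows "\<bar>CVaR S x p a v - CVaR S x p a w\<bar> \<le> (\<Sum>i<S. norm (x i)) / a * norm (v - w)"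
proof -
  define L where "L = (\<Sum>i<S. norm (x i)) / a"
  have 1: "CVaR S x p a v - CVaR S x p a w \<le> L * norm (v - w)"
  proof -
    have "CVaR S x p a v - CVaR S x p a w \<le> grad (sp w) a \<bullet> (v - w)" using CVaR_super[OF a] by smt
    also have "\<dots> \<le> norm (grad (sp w) a) * norm (v - w)" by (rule norm_cauchy_schwarz)
    also have "\<dots> \<le> L * norm (v - w)" unfolding L_def by (rule mult_right_mono[OF grad_norm[OF sp_bij a]]) simp
    finally show ?thesis .
  qed
  have 2: "CVaR S x p a w - CVaR S x p a v \<le> L * norm (v - w)"
  proof -
    have "CVaR S x p a w - CVaR S x p a v \<le> grad (sp v) a \<bullet> (w - v)" using CVaR_super[OF a] by smt
    also have "\<dots> \<le> norm (grad (sp v) a) * norm (w - v)" by (rule norm_cauchy_schwarz)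
    also have "\<dots> \<le> L * norm (w - v)" unfolding L_def by (rule mult_right_mono[OF grad_norm[OF sp_bij a]]) simp
    finally show ?thesis by (simp add: norm_minus_commute)
  qed
  show ?thesis using 1 2 unfolding L_def by linarith
qed

lemma CVaR_zero:
  assumes a: "0 < a" "a < 1"
  shows "CVaR S x p a 0 = 0"
  using CVaR_eq[OF a] by (simp add: Lin_inner)

lemma CVaR_cont:
  assumes a: "0 < a" "a < 1"
  shows "continuous_on UNIV (CVaR S x p a)"
proof -
  have L: "0 \<le> (\<Sum>i<S. norm (x i)) / a" using a by (simp add: sum_nonneg)
  have "((\<Sum>i<S. norm (x i)) / a)-lipschitz_on UNIV (CVaR S x p a)"
    unfolding lipschitz_on_def using CVaR_lip[OF a] L by (simp add: dist_norm dist_real_def)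
  then show ?thesis by (rule lipschitz_on_continuous_on)
qed

end


definition cvx :: "(real^'n \<Rightarrow> real) \<Rightarrow> bool" where
  "cvx C \<longleftrightarrow> (\<forall>v w t. 0 \<le> t \<and> t \<le> 1 \<longrightarrow> C ((1 - t) *\<^sub>R v + t *\<^sub>R w) \<le> (1 - t) * C v + t * C w)"

lemma cvxD: "cvx C \<Longrightarrow> 0 \<le> t \<Longrightarrow> t \<le> 1 \<Longrightarrow> C ((1 - t) *\<^sub>R v + t *\<^sub>R w) \<le> (1 - t) * C v + t * C w"
  unfolding cvx_def by blast

lemma cvx_add: "cvx C \<Longrightarrow> cvx D \<Longrightarrow> cvx (\<lambda>v. C v + D v)"
  unfolding cvx_def
proof (intro allI impI)
  fix v w and t :: real
  assume h: "\<forall>v w t. 0 \<le> t \<and> t \<le> 1 \<longrightarrow> C ((1 - t) *\<^sub>R v + t *\<^sub>R w) \<le> (1 - t) * C v + t * C w"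
    "\<forall>v w t. 0 \<le> t \<and> t \<le> 1 \<longrightarrow> D ((1 - t) *\<^sub>R v + t *\<^sub>R w) \<le> (1 - t) * D v + t * D w"
    "0 \<le> t \<and> t \<le> 1"
  then have "C ((1 - t) *\<^sub>R v + t *\<^sub>R w) + D ((1 - t) *\<^sub>R v + t *\<^sub>R w) \<le> ((1 - t) * C v + t * C w) + ((1 - t) * D v + t * D w)"
    by (intro add_mono) auto
  then show "C ((1 - t) *\<^sub>R v + t *\<^sub>R w) + D ((1 - t) *\<^sub>R v + t *\<^sub>R w) \<le> (1 - t) * (C v + D v) + t * (C w + D w)"
    by (simp add: algebra_simps)
qed

lemma cvx_scale: "cvx C \<Longrightarrow> 0 \<le> c \<Longrightarrow> cvx (\<lambda>v. c * C v)"
  unfolding cvx_def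
proof (intro allI impI)
  fix v w and t :: real
  assume h: "\<forall>v w t. 0 \<le> t \<and> t \<le> 1 \<longrightarrow> C ((1 - t) *\<^sub>R v + t *\<^sub>R w) \<le> (1 - t) * C v + t * C w"
    "0 \<le> c" "0 \<le> t \<and> t \<le> 1"
  then have "c * C ((1 - t) *\<^sub>R v + t *\<^sub>R w) \<le> c * ((1 - t) * C v + t * C w)"
    by (intro mult_left_mono) auto
  then show "c * C ((1 - t) *\<^sub>R v + t *\<^sub>R w) \<le> (1 - t) * (c * C v) + t * (c * C w)"
    by (simp add: algebra_simps)
qed

lemma cvx_lin: "cvx (\<lambda>v. v \<bullet> g + b)"
  unfolding cvx_def by (simp add: inner_add_left algebra_simps)

lemma cvx_max: "cvx C \<Longrightarrow> cvx D \<Longrightarrow> cvx (\<lambda>v. max (C v) (D v))"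
  unfolding cvx_def
proof (intro allI impI)
  fix v w and t :: real
  assume h: "\<forall>v w t. 0 \<le> t \<and> t \<le> 1 \<longrightarrow> C ((1 - t) *\<^sub>R v + t *\<^sub>R w) \<le> (1 - t) * C v + t * C w"
    "\<forall>v w t. 0 \<le> t \<and> t \<le> 1 \<longrightarrow> D ((1 - t) *\<^sub>R v + t *\<^sub>R w) \<le> (1 - t) * D v + t * D w"
    "0 \<le> t \<and> t \<le> 1"
  have "(1 - t) * C v + t * C w \<le> (1 - t) * max (C v) (D v) + t * max (C w) (D w)"
    using h(3) by (intro add_mono mult_left_mono) auto
  moreover have "(1 - t) * D v + t * D w \<le> (1 - t) * max (C v) (D v) + t * max (C w) (D w)"
    using h(3) by (intro add_mono mult_left_mono) auto
  ultimately show "max (C ((1 - t) *\<^sub>R v + t *\<^sub>R w)) (D ((1 - t) *\<^sub>R v + t *\<^sub>R w))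
       \<le> (1 - t) * max (C v) (D v) + t * max (C w) (D w)"
    using h by (meson max.boundedI order_trans)
qed

lemma (in cv) cvx_negCVaR: "0 < a \<Longrightarrow> a < 1 \<Longrightarrow> cvx (\<lambda>v. - CVaR S x p a v)"
  unfolding cvx_def
proof (intro allI impI)
  fix v w and t :: real
  assume "0 < a" "a < 1" "0 \<le> t \<and> t \<le> 1"
  then have "(1 - t) * CVaR S x p a v + t * CVaR S x p a w \<le> CVaR S x p a ((1 - t) *\<^sub>R v + t *\<^sub>R w)"
    using CVaR_concave by auto
  then show "- CVaR S x p a ((1 - t) *\<^sub>R v + t *\<^sub>R w) \<le> (1 - t) * - CVaR S x p a v + t * - CVaR S x p a w"
    by simp
qed

lemma small_le0:
  fixes A B :: real
  assumes "\<And>t. 0 < t \<Longrightarrow> t \<le> 1 \<Longrightarrow> A \<le> t * B" "0 \<le> B"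
  shows "A \<le> 0"
proof (rule ccontr)
  assume "\<not> A \<le> 0"
  then have A: "A > 0" by simp
  have AB: "A \<le> B" using assms(1)[of 1] by simp
  then have B: "B > 0" using A by simp
  have "A \<le> (A / (2 * B)) * B" using assms(1)[of "A / (2 * B)"] A B AB by (simp add: field_simps)
  then show False using A B by (simp add: field_simps)
qed

lemma sq_expand: "(norm ((w::real^'n)))^2 = (norm y)^2 + 2 * (y \<bullet> (w - y)) + (norm (w - y))^2"
  by (simp add: power2_norm_eq_inner inner_diff_left inner_diff_right inner_commute algebra_simps)

lemma sc_core:
  fixes C :: "real^'n \<Rightarrow> real" and \<rho> l :: real
  assumes C: "cvx C" and \<rho>: "0 < \<rho>"
    and h: "\<And>t. 0 < t \<Longrightarrow> t \<le> 1 \<Longrightarrow> psi \<rho> y + C y + t * l \<le> psi \<rho> (y + t *\<^sub>R (w - y)) + C (y + t *\<^sub>R (w - y))"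
  shows "psi \<rho> y + C y + l + \<rho> / 2 * (norm (w - y))^2 \<le> psi \<rho> w + C w"
proof -
  define d where "d = w - y"
  have A: "l - \<rho> * (y \<bullet> d) - C w + C y \<le> 0"
  proof (rule small_le0[where B="\<rho> / 2 * (norm d)^2"])
    fix t :: real assume t: "0 < t" "t \<le> 1"
    have e: "y + t *\<^sub>R d = (1 - t) *\<^sub>R y + t *\<^sub>R w" unfolding d_def by (simp add: algebra_simps)
    have Cc: "C (y + t *\<^sub>R d) \<le> (1 - t) * C y + t * C w" unfolding e using cvxD[OF C] t by simp
    have ps: "psi \<rho> (y + t *\<^sub>R d) = psi \<rho> y + t * \<rho> * (y \<bullet> d) + t^2 * (\<rho> / 2 * (norm d)^2)"
    proof -
      have "(norm (y + t *\<^sub>R d))^2 = (norm y)^2 + 2 * t * (y \<bullet> d) + t^2 * (norm d)^2"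
        unfolding power2_norm_eq_inner by (simp add: inner_add_left inner_add_right inner_commute power2_eq_square algebra_simps)
      then show ?thesis unfolding psi_def by (simp add: algebra_simps)
    qed
    have "psi \<rho> y + C y + t * l \<le> psi \<rho> y + t * \<rho> * (y \<bullet> d) + t^2 * (\<rho> / 2 * (norm d)^2) + ((1 - t) * C y + t * C w)"
      using h[OF t] Cc ps unfolding d_def by simp
    then have "t * (l - \<rho> * (y \<bullet> d) - C w + C y) \<le> t * (t * (\<rho> / 2 * (norm d)^2))"
      by (simp add: algebra_simps power2_eq_square)
    then show "l - \<rho> * (y \<bullet> d) - C w + C y \<le> t * (\<rho> / 2 * (norm d)^2)"
      using t by simp
  qed (use \<rho> in simp)
  have "psi \<rho> w = psi \<rho> y + \<rho> * (y \<bullet> d) + \<rho> / 2 * (norm d)^2"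
  proof -
    have nw: "(norm w)^2 = (norm y)^2 + 2 * (y \<bullet> d) + (norm d)^2" unfolding d_def by (rule sq_expand)
    show ?thesis unfolding psi_def nw by (simp add: algebra_simps)
  qed
  then show ?thesis using A unfolding d_def by simp
qed



lemma simplex_conv:
  assumes "v \<in> port_simplex" "w \<in> port_simplex" "0 \<le> t" "t \<le> 1"
  shows "(1 - t) *\<^sub>R v + t *\<^sub>R w \<in> port_simplex"
proof -
  have c: "\<forall>i. 0 \<le> v$i \<and> v$i \<le> 1" "\<forall>i. 0 \<le> w$i \<and> w$i \<le> 1"
    and s: "(\<Sum>i\<in>UNIV. v$i) = 1" "(\<Sum>i\<in>UNIV. w$i) = 1" using assms(1,2) by (auto simp: port_simplex_def)
  have "0 \<le> (1 - t) * v$i + t * w$i \<and> (1 - t) * v$i + t * w$i \<le> 1" for i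
  proof -
    have "(1 - t) * v$i \<le> (1 - t) * 1" "t * w$i \<le> t * 1"
      using c assms(3,4) by (intro mult_left_mono; auto)+
    then have "(1 - t) * v$i \<le> 1 - t" "t * w$i \<le> t" by simp_all
    moreover have "0 \<le> (1 - t) * v$i" "0 \<le> t * w$i" using c assms(3,4) by auto
    ultimately show ?thesis by linarith
  qed
  moreover have "(\<Sum>i\<in>UNIV. (1 - t) * v$i + t * w$i) = 1"
    by (simp add: sum.distrib sum_distrib_left[symmetric] s)
  ultimately show ?thesis unfolding port_simplex_def by simp
qed

lemma convex_simplex: "convex port_simplex"
  unfolding convex_def
proof (intro ballI allI impI)
  fix v w :: "real^'n" and a b :: real
  assume h: "v \<in> port_simplex" "w \<in> port_simplex" "0 \<le> a" "0 \<le> b" "a + b = 1"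
  then have "a = 1 - b" by simp
  then have e: "a *\<^sub>R v + b *\<^sub>R w = (1 - b) *\<^sub>R v + b *\<^sub>R w" by simp
  show "a *\<^sub>R v + b *\<^sub>R w \<in> port_simplex" unfolding e using simplex_conv[OF h(1,2), of b] h by simp
qed

lemma closed_simplex: "closed (port_simplex :: (real^'n) set)"
  unfolding port_simplex_def
  by (intro closed_Collect_all closed_Collect_conj closed_Collect_le closed_Collect_eq continuous_intros)

lemma simplex_sub_box: "port_simplex \<subseteq> cbox (0::real^'n) 1"
  unfolding port_simplex_def by (auto simp: mem_box_cart)

lemma compact_simplex: "compact (port_simplex :: (real^'n) set)"
  using closed_simplex bounded_subset[OF bounded_cbox simplex_sub_box]
  by (simp add: compact_eq_bounded_closed)

lemma axis_simplex: "axis i 1 \<in> (port_simplex :: (real^'n) set)"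
proof -
  have "(\<Sum>j\<in>UNIV. (axis i 1 :: real^'n) $ j) = 1"
    by (simp add: axis_def)
  then show ?thesis unfolding port_simplex_def by (auto simp: axis_def)
qed

lemma simplex_nonempty: "port_simplex \<noteq> ({} :: (real^'n) set)"
  using axis_simplex by blast

lemma norm_simplex: "v \<in> port_simplex \<Longrightarrow> norm v \<le> 1"
proof -
  assume v: "v \<in> port_simplex"
  then have "(\<Sum>i\<in>UNIV. \<bar>v$i\<bar>) = (\<Sum>i\<in>UNIV. v$i)" by (intro sum.cong) (auto simp: port_simplex_def)
  then show ?thesis using norm_le_l1_cart[of v] v by (simp add: port_simplex_def)
qed

lemma ls_init_props:
  fixes w y :: "real^'n"
  assumes w: "w \<in> port_simplex" and y: "y \<in> port_simplex" and ne: "y \<noteq> w"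
  shows "w + ls_init w (y - w) *\<^sub>R (y - w) \<in> port_simplex" "1 \<le> ls_init w (y - w)"
proof -
  define d where "d = y - w"
  define L where "L = {l. w + l *\<^sub>R d \<in> port_simplex}"
  have cl: "closed L" unfolding L_def
    using continuous_closed_vimage[OF closed_simplex, of "\<lambda>l. w + l *\<^sub>R d"]
    by (simp add: vimage_def continuous_intros)
  have 1: "1 \<in> L" using y unfolding L_def d_def by simp
  have sd: "(\<Sum>i\<in>UNIV. d$i) = 0" using w y unfolding d_def port_simplex_def by (simp add: sum_subtractf)
  have "\<exists>i. d$i < 0"
  proof (rule ccontr)
    assume "\<not> (\<exists>i. d$i < 0)"
    then have nn: "\<forall>i. 0 \<le> d$i" by (simp add: not_less)
    then have "\<forall>i\<in>UNIV. d$i = 0" using sum_nonneg_eq_0_iff[of UNIV "\<lambda>i. d$i"] sd by simp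
    then have "d = 0" by (simp add: vec_eq_iff)
    then show False using ne unfolding d_def by simp
  qed
  then obtain i where i: "d$i < 0" by blast
  have bd: "bdd_above L"
  proof (rule bdd_aboveI)
    fix l assume "l \<in> L"
    then have "0 \<le> w$i + l * d$i" unfolding L_def port_simplex_def by auto
    then show "l \<le> - w$i / d$i" using i by (simp add: field_simps)
  qed
  have SL: "Sup L \<in> L" using closed_contains_Sup[OF _ bd cl] 1 by blast
  have g: "ls_init w d = Sup L" unfolding ls_init_def
    by (rule Greatest_equality) (use SL cSup_upper[OF _ bd] in \<open>auto simp: L_def\<close>)
  show "w + ls_init w (y - w) *\<^sub>R (y - w) \<in> port_simplex" using SL g unfolding L_def d_def by simp
  show "1 \<le> ls_init w (y - w)" using g cSup_upper[OF 1 bd] unfolding d_def by simp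
qed

lemma ls_seg:
  fixes w d :: "real^'n"
  assumes w: "w \<in> port_simplex" and e: "w + l0 *\<^sub>R d \<in> port_simplex" and l: "0 \<le> l" "l \<le> l0"
  shows "w + l *\<^sub>R d \<in> port_simplex"
proof (cases "l0 = 0")
  case True then show ?thesis using l w by simp
next
  case False
  then have l0: "l0 > 0" using l by simp
  have "w + l *\<^sub>R d = (1 - l / l0) *\<^sub>R w + (l / l0) *\<^sub>R (w + l0 *\<^sub>R d)"
    using l0 by (simp add: algebra_simps)
  then show ?thesis using simplex_conv[OF w e, of "l / l0"] l l0 by simp
qed

lemma ls_iter_eq:
  assumes "0 < \<beta>" "\<beta> < 1" "1 \<le> l0"
  shows "ls_iter \<beta> l0 m = max 1 (\<beta>^m * l0)"
proof (induction m)
  case 0 then show ?case using assms by (simp add: ls_iter_def)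
next
  case (Suc m)
  have "ls_iter \<beta> l0 (Suc m) = max 1 (\<beta> * ls_iter \<beta> l0 m)" by (simp add: ls_iter_def)
  also have "\<dots> = max 1 (\<beta> * max 1 (\<beta>^m * l0))" using Suc by simp
  also have "\<dots> = max 1 (\<beta>^Suc m * l0)"
  proof (cases "1 \<le> \<beta>^m * l0")
    case True then show ?thesis by simp
  next
    case False
    have "\<beta> * (\<beta>^m * l0) \<le> 1 * (\<beta>^m * l0)" using assms by (intro mult_right_mono) auto
    then have "\<beta> * (\<beta>^m * l0) < 1" using False by simp
    then have "\<beta>^Suc m * l0 < 1" by (simp add: mult.assoc)
    then show ?thesis using False assms by (simp add: max_def)
  qed
  finally show ?case .
qed

lemma ls_iter_props:
  assumes "0 < \<beta>" "\<beta> < 1" "1 \<le> l0"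
  shows "1 \<le> ls_iter \<beta> l0 m" "ls_iter \<beta> l0 m \<le> l0" "\<exists>m. ls_iter \<beta> l0 m = 1"
proof -
  show "1 \<le> ls_iter \<beta> l0 m" using ls_iter_eq[OF assms] by simp
  have "\<beta>^m \<le> 1" using assms by (simp add: power_le_one)
  then have "\<beta>^m * l0 \<le> l0" using assms by (simp add: mult_left_le_one_le)
  then show "ls_iter \<beta> l0 m \<le> l0" using ls_iter_eq[OF assms] assms by simp
  obtain n where "\<beta>^n < 1 / l0" using real_arch_pow_inv[of "1 / l0" \<beta>] assms by auto
  then have "\<beta>^n * l0 < 1" using assms by (simp add: field_simps)
  then show "\<exists>m. ls_iter \<beta> l0 m = 1" using ls_iter_eq[OF assms, of n] by auto
qed



lemma cvx_psi: assumes "0 \<le> \<rho>" shows "cvx (psi \<rho>)"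
  unfolding cvx_def
proof (intro allI impI)
  fix v w :: "real^'n" and t :: real
  assume t: "0 \<le> t \<and> t \<le> 1"
  have e1: "(norm ((1 - t) *\<^sub>R v + t *\<^sub>R w))^2 = (1-t)^2 * (norm v)^2 + 2 * (1-t) * t * (v \<bullet> w) + t^2 * (norm w)^2"
    unfolding power2_norm_eq_inner by (simp add: inner_add_left inner_add_right inner_commute power2_eq_square algebra_simps)
  have e2: "(norm (v - w))^2 = (norm v)^2 - 2 * (v \<bullet> w) + (norm w)^2"
    unfolding power2_norm_eq_inner by (simp add: inner_diff_left inner_diff_right inner_commute algebra_simps)
  have e3: "(norm ((1 - t) *\<^sub>R v + t *\<^sub>R w))^2 = (1 - t) * (norm v)^2 + t * (norm w)^2 - t * (1 - t) * (norm (v - w))^2"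
    unfolding e1 e2 by (simp add: algebra_simps power2_eq_square)
  have "0 \<le> t * (1 - t) * (norm (v - w))^2" using t by simp
  then have "(norm ((1 - t) *\<^sub>R v + t *\<^sub>R w))^2 \<le> (1 - t) * (norm v)^2 + t * (norm w)^2" using e3 by linarith
  then have "\<rho> / 2 * (norm ((1 - t) *\<^sub>R v + t *\<^sub>R w))^2 \<le> \<rho> / 2 * ((1 - t) * (norm v)^2 + t * (norm w)^2)"
    using assms by (intro mult_left_mono) auto
  moreover have r: "\<rho> / 2 * ((1 - t) * (norm v)^2 + t * (norm w)^2) = (1 - t) * (\<rho> / 2 * (norm v)^2) + t * (\<rho> / 2 * (norm w)^2)"
    by (simp add: field_simps)
  ultimately show "psi \<rho> ((1 - t) *\<^sub>R v + t *\<^sub>R w) \<le> (1 - t) * psi \<rho> v + t * psi \<rho> w"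
    unfolding psi_def by linarith
qed

lemma neg_limit:
  fixes b c \<beta> :: real
  assumes "\<And>t. t < 0 \<Longrightarrow> b \<le> c + \<beta> * t" "\<beta> < 0"
  shows "b \<le> c"
proof (rule ccontr)
  assume "\<not> b \<le> c"
  then have bc: "b - c > 0" by simp
  have "b \<le> c + \<beta> * ((b - c) / (2 * \<beta>))" using assms(1)[of "(b - c) / (2 * \<beta>)"] bc assms(2)
    by (simp add: divide_pos_neg)
  then show False using bc assms(2) by (simp add: field_simps)
qed

lemma kkt_from_min:
  fixes F :: "real^'n \<Rightarrow> real"
  assumes F: "cvx F" and wb: "wb \<in> port_simplex" and mn: "\<forall>v\<in>port_simplex. F wb \<le> F v"
  shows "\<exists>\<eta>. (\<forall>v. F wb + \<eta> \<bullet> (v - wb) \<le> F v) \<and> (\<forall>v\<in>port_simplex. 0 \<le> \<eta> \<bullet> (v - wb))"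
proof -
  define K1 :: "((real^'n) \<times> real) set" where "K1 = {z. F (fst z) - F wb \<le> snd z}"
  define K2 :: "((real^'n) \<times> real) set" where "K2 = port_simplex \<times> {..<0}"
  have c1: "convex K1" unfolding convex_def K1_def
  proof (intro ballI allI impI, simp)
    fix z1 z2 :: "(real^'n) \<times> real" and a b :: real
    assume h: "F (fst z1) - F wb \<le> snd z1" "F (fst z2) - F wb \<le> snd z2" "0 \<le> a" "0 \<le> b" "a + b = 1"
    then have a: "a = 1 - b" by simp
    have "F (a *\<^sub>R fst z1 + b *\<^sub>R fst z2) \<le> a * F (fst z1) + b * F (fst z2)"
      using cvxD[OF F, of b "fst z1" "fst z2"] h a by simp
    also have "\<dots> \<le> a * (snd z1 + F wb) + b * (snd z2 + F wb)"
      using h by (intro add_mono mult_left_mono) auto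
    also have "\<dots> = a * snd z1 + b * snd z2 + F wb" 
    proof -
      have "a * F wb + b * F wb = F wb" using h(5) by (metis distrib_right mult_1)
      then show ?thesis by (simp add: algebra_simps)
    qed
    finally show "F (a *\<^sub>R fst z1 + b *\<^sub>R fst z2) - F wb \<le> a * snd z1 + b * snd z2" by simp
  qed
  have c2: "convex K2" unfolding K2_def by (intro convex_Times convex_simplex convex_real_interval)
  have n1: "K1 \<noteq> {}" using K1_def by (auto intro!: exI[of _ "(wb, 0)"])
  have n2: "K2 \<noteq> {}" using wb unfolding K2_def by (auto intro!: exI[of _ "(wb, -1)"])
  have dj: "K1 \<inter> K2 = {}"
  proof (rule ccontr)
    assume "K1 \<inter> K2 \<noteq> {}"
    then obtain z where "z \<in> K1" "z \<in> K2" by blast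
    then show False using mn unfolding K1_def K2_def by force
  qed
  obtain A b where A: "A \<noteq> 0" and s1: "\<forall>z\<in>K1. inner A z \<le> b" and s2: "\<forall>z\<in>K2. b \<le> inner A z"
    using separating_hyperplane_sets[OF c1 c2 n1 n2 dj] by blast
  define a where "a = fst A"
  define \<beta> where "\<beta> = snd A"
  have i1: "a \<bullet> v + \<beta> * t \<le> b" if "F v - F wb \<le> t" for v t
    using s1[rule_format, of "(v, t)"] that unfolding K1_def a_def \<beta>_def by (simp add: inner_prod_def)
  have i2: "b \<le> a \<bullet> v + \<beta> * t" if "v \<in> port_simplex" "t < 0" for v t
    using s2[rule_format, of "(v, t)"] that unfolding K2_def a_def \<beta>_def by (simp add: inner_prod_def)
  have b0: "\<beta> \<le> 0"
  proof (rule ccontr)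
    assume "\<not> \<beta> \<le> 0"
    then have bp: "\<beta> > 0" by simp
    define t where "t = max 0 ((b - a \<bullet> wb + 1) / \<beta>)"
    have "(b - a \<bullet> wb + 1) / \<beta> \<le> t" unfolding t_def by simp
    then have "\<beta> * ((b - a \<bullet> wb + 1) / \<beta>) \<le> \<beta> * t" using bp by (intro mult_left_mono) auto
    then have "\<beta> * t \<ge> b - a \<bullet> wb + 1" using bp by simp
    moreover have "a \<bullet> wb + \<beta> * t \<le> b" using i1[of wb t] unfolding t_def by simp
    ultimately show False by simp
  qed
  have bn: "\<beta> \<noteq> 0"
  proof
    assume b0: "\<beta> = 0"
    have "a \<bullet> v \<le> b" for v using i1[of v "F v - F wb"] b0 by simp
    then have "a \<bullet> (((\<bar>b\<bar> + 1) / (a \<bullet> a)) *\<^sub>R a) \<le> b" by blast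
    then have "a = 0"
    proof (cases "a = 0")
      case False
      then have aa: "a \<bullet> a > 0" by simp
      assume h: "a \<bullet> (((\<bar>b\<bar> + 1) / (a \<bullet> a)) *\<^sub>R a) \<le> b"
      have "a \<bullet> (((\<bar>b\<bar> + 1) / (a \<bullet> a)) *\<^sub>R a) = \<bar>b\<bar> + 1" using aa by simp
      then show ?thesis using h by linarith
    qed
    then have "A = 0" using b0 unfolding a_def \<beta>_def by (simp add: prod_eq_iff)
    then show False using A by simp
  qed
  have bneg: "\<beta> < 0" using b0 bn by simp
  have bw: "b = a \<bullet> wb"
  proof -
    have "b \<le> a \<bullet> wb" by (rule neg_limit[OF _ bneg]) (use i2 wb in auto)
    moreover have "a \<bullet> wb \<le> b" using i1[of wb 0] by simp
    ultimately show ?thesis by simp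
  qed
  define \<eta> where "\<eta> = (- 1 / \<beta>) *\<^sub>R a"
  have "F wb + \<eta> \<bullet> (v - wb) \<le> F v" for v
  proof -
    have "a \<bullet> v + \<beta> * (F v - F wb) \<le> a \<bullet> wb" using i1[of v "F v - F wb"] bw by simp
    then have "a \<bullet> (v - wb) \<le> (- \<beta>) * (F v - F wb)" by (simp add: inner_diff_right algebra_simps)
    then have "a \<bullet> (v - wb) / (- \<beta>) \<le> ((- \<beta>) * (F v - F wb)) / (- \<beta>)"
      using bneg by (intro divide_right_mono) auto
    then have "a \<bullet> (v - wb) / (- \<beta>) \<le> F v - F wb" using bneg by simp
    moreover have "\<eta> \<bullet> (v - wb) = a \<bullet> (v - wb) / (- \<beta>)" unfolding \<eta>_def by simp
    ultimately show ?thesis by linarith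
  qed
  moreover have "0 \<le> \<eta> \<bullet> (v - wb)" if v: "v \<in> port_simplex" for v
  proof -
    have "b \<le> a \<bullet> v" by (rule neg_limit[OF _ bneg]) (use i2 v in auto)
    then have "0 \<le> a \<bullet> (v - wb)" using bw by (simp add: inner_diff_right)
    then show ?thesis unfolding \<eta>_def using bneg by (simp add: divide_nonneg_neg)
  qed
  ultimately show ?thesis by blast
qed

lemma normal_simplex:
  fixes \<eta> wb :: "real^'n"
  assumes wb: "wb \<in> port_simplex" and n: "\<forall>v\<in>port_simplex. 0 \<le> \<eta> \<bullet> (v - wb)"
  shows "\<exists>\<pi> \<nu>. \<eta> - \<pi> + \<nu> *\<^sub>R (\<chi> i. 1) = 0 \<and> (\<forall>i. 0 \<le> \<pi>$i \<and> \<pi>$i * wb$i = 0)"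
proof -
  define m where "m = Min (range (\<lambda>i. \<eta>$i))"
  have mle: "m \<le> \<eta>$i" for i unfolding m_def by (rule Min_le) auto
  have "m \<in> range (\<lambda>i. \<eta>$i)" unfolding m_def by (rule Min_in) auto
  then obtain i0 where i0: "\<eta>$i0 = m" by auto
  have "0 \<le> \<eta> \<bullet> (axis i0 1 - wb)" using n axis_simplex by blast
  then have ew: "\<eta> \<bullet> wb \<le> m" using i0 by (simp add: inner_diff_right inner_axis)
  have sw: "(\<Sum>i\<in>UNIV. wb$i) = 1" and w0: "\<forall>i. 0 \<le> wb$i" using wb by (auto simp: port_simplex_def)
  have "(\<Sum>i\<in>UNIV. (\<eta>$i - m) * wb$i) = \<eta> \<bullet> wb - m * (\<Sum>i\<in>UNIV. wb$i)"
    by (simp add: inner_vec_def algebra_simps sum_subtractf sum_distrib_left)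
  also have "\<dots> \<le> 0" using ew sw by simp
  finally have "(\<Sum>i\<in>UNIV. (\<eta>$i - m) * wb$i) \<le> 0" .
  moreover have nn: "\<And>i. 0 \<le> (\<eta>$i - m) * wb$i" using mle w0 by simp
  ultimately have "(\<Sum>i\<in>UNIV. (\<eta>$i - m) * wb$i) = 0" by (meson antisym sum_nonneg)
  then have z: "\<forall>i. (\<eta>$i - m) * wb$i = 0" using sum_nonneg_eq_0_iff[of UNIV "\<lambda>i. (\<eta>$i - m) * wb$i"] nn by simp
  define \<pi> :: "real^'n" where "\<pi> = (\<chi> i. \<eta>$i - m)"
  have "\<eta> - \<pi> + (- m) *\<^sub>R (\<chi> i. 1) = 0" unfolding \<pi>_def by (simp add: vec_eq_iff)
  moreover have "\<forall>i. 0 \<le> \<pi>$i \<and> \<pi>$i * wb$i = 0" unfolding \<pi>_def using mle z by simp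
  ultimately show ?thesis by blast
qed



lemma cvx_const: "cvx (\<lambda>v. c)"
  unfolding cvx_def by (simp add: algebra_simps)

theorem theorem1:
  fixes S :: nat and x :: "nat \<Rightarrow> real^'n" and p :: "nat \<Rightarrow> real"
    and \<alpha> \<gamma> rmin \<tau> \<rho> \<beta> :: real
    and w y u :: "nat \<Rightarrow> real^'n" and lam :: "nat \<Rightarrow> real"
    and G H \<Phi> :: "real^'n \<Rightarrow> real"
  defines "G \<equiv> g_dc S x p \<alpha> \<gamma> rmin \<tau> \<rho>"
    and "H \<equiv> h_dc S x p \<alpha> \<gamma> \<tau> \<rho>"
    and "\<Phi> \<equiv> (\<lambda>v. G v - H v)"
  assumes p_range: "\<forall>j<S. 0 \<le> p j \<and> p j \<le> 1"
    and p_sum: "(\<Sum>j<S. p j) = 1"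
    and alpha: "0 < \<alpha>" "\<alpha> < 1"
    and gamma: "0 < \<gamma>"
      "\<forall>v\<in>port_simplex. \<forall>\<sigma>. sorting_perm S x v \<sigma> \<longrightarrow> \<gamma> < cut_eps S p \<sigma> \<alpha>"
    and params: "0 < \<tau>" "0 < \<rho>" "0 < \<beta>" "\<beta> < 1"
    and w0: "w 0 \<in> port_simplex"
    and u_sub: "\<forall>k. u k \<in> subdiff H (w k)"
    and y_min: "\<forall>k. y k \<in> port_simplex \<and> (\<forall>v\<in>port_simplex. G (y k) - y k \<bullet> u k \<le> G v - v \<bullet> u k)"
    and stop: "\<forall>k. y k = w k \<longrightarrow> w (Suc k) = w k"
    and step: "\<forall>k. y k \<noteq> w k \<longrightarrow>
        lam k = ls_iter \<beta> (ls_init (w k) (y k - w k))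
                  (LEAST m. \<Phi> (w k + ls_iter \<beta> (ls_init (w k) (y k - w k)) m *\<^sub>R (y k - w k))
                      \<le> \<Phi> (w k) - \<rho> * (ls_iter \<beta> (ls_init (w k) (y k - w k)) m)^2 * (norm (y k - w k))^2)
        \<and> w (Suc k) = w k + lam k *\<^sub>R (y k - w k)"
  shows "(\<forall>k. \<Phi> (y k) \<le> \<Phi> (w k) - \<rho> * (norm (y k - w k))^2)
    \<and> (\<forall>k. y k \<noteq> w k \<longrightarrow>
          (\<exists>m. \<Phi> (w k + ls_iter \<beta> (ls_init (w k) (y k - w k)) m *\<^sub>R (y k - w k))
                \<le> \<Phi> (w k) - \<rho> * (ls_iter \<beta> (ls_init (w k) (y k - w k)) m)^2 * (norm (y k - w k))^2)
          \<and> \<Phi> (w (Suc k)) \<le> \<Phi> (w k) - \<rho> * (lam k)^2 * (norm (y k - w k))^2)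
    \<and> decseq (\<lambda>k. \<Phi> (w k)) \<and> (\<exists>\<phi>b. (\<lambda>k. \<Phi> (w k)) \<longlonglongrightarrow> \<phi>b)
    \<and> (\<exists>r wb. strict_mono r \<and> (w \<circ> r) \<longlonglongrightarrow> wb \<and> is_KKT G H wb)"
proof -
  interpret cv S x p using p_range p_sum by unfold_locales auto
  have a2: "0 < \<alpha> - \<gamma>" "\<alpha> - \<gamma> < 1"
  proof -
    define e :: "real^'n" where "e = axis undefined 1"
    have e: "e \<in> port_simplex" using axis_simplex by (simp add: e_def)
    have "\<gamma> < cut_eps S p (sp e) \<alpha>" using gamma(2) e sp_sorting by blast
    moreover have "0 \<le> (\<Sum>j<cut_index S p (sp e) \<alpha>. p (sp e j))"
    proof (rule sum_nonneg)
      fix j assume "j \<in> {..<cut_index S p (sp e) \<alpha>}"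
      then have "j < S" using cut_props(1)[OF sp_bij alpha, of e] by simp
      then have "sp e j < S" using sp_bij[of e] by (auto simp: bij_betw_def)
      then show "0 \<le> p (sp e j)" using p_range by auto
    qed
    ultimately show "0 < \<alpha> - \<gamma>" "\<alpha> - \<gamma> < 1" unfolding cut_eps_def using alpha gamma(1) by auto
  qed
  define gf :: "real^'n" where "gf = - (\<Sum>j<S. p j *\<^sub>R x j)"
  define CG where "CG = (\<lambda>v. G v - psi \<rho> v)"
  define CH where "CH = (\<lambda>v. H v - psi \<rho> v)"
  have CG_eq: "CG = (\<lambda>v. (v \<bullet> gf + 0) + \<tau> * max ((\<alpha> / \<gamma>) * (- CVaR S x p \<alpha> v) + rmin)
                   (((\<alpha> - \<gamma>) / \<gamma>) * (- CVaR S x p (\<alpha> - \<gamma>) v)))"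
    unfolding CG_def G_def g_dc_def f_obj_def gf_def
    by (auto simp: inner_sum_right inner_commute[of _ "x _"] intro!: ext)
  have cvxCG: "cvx CG"
  proof -
    have A: "cvx (\<lambda>v. (\<alpha> / \<gamma>) * (- CVaR S x p \<alpha> v) + rmin)"
      by (rule cvx_add[OF cvx_scale[OF cvx_negCVaR[OF alpha]] cvx_const]) (use alpha gamma(1) in simp)
    have B: "cvx (\<lambda>v. ((\<alpha> - \<gamma>) / \<gamma>) * (- CVaR S x p (\<alpha> - \<gamma>) v))"
      by (rule cvx_scale[OF cvx_negCVaR[OF a2]]) (use a2 gamma(1) in simp)
    have "cvx (\<lambda>v. (v \<bullet> gf + 0) + \<tau> * max ((\<alpha> / \<gamma>) * (- CVaR S x p \<alpha> v) + rmin)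
                   (((\<alpha> - \<gamma>) / \<gamma>) * (- CVaR S x p (\<alpha> - \<gamma>) v)))"
      by (rule cvx_add[OF cvx_lin cvx_scale[OF cvx_max[OF A B]]]) (use params in simp)
    then show ?thesis unfolding CG_eq .
  qed
  have CH_eq: "CH = (\<lambda>v. (\<tau> * ((\<alpha> - \<gamma>) / \<gamma>)) * (- CVaR S x p (\<alpha> - \<gamma>) v))"
    unfolding CH_def H_def h_dc_def by (auto intro!: ext)
  have cvxCH: "cvx CH" unfolding CH_eq
    by (rule cvx_scale[OF cvx_negCVaR[OF a2]]) (use a2 gamma(1) params in simp)
  have GG: "\<And>v. G v = psi \<rho> v + CG v" and HH: "\<And>v. H v = psi \<rho> v + CH v"
    unfolding CG_def CH_def by simp_all
  have contG: "continuous_on UNIV G"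
    unfolding G_def g_dc_def psi_def f_obj_def
    by (intro continuous_intros CVaR_cont[OF alpha] CVaR_cont[OF a2])
  have contH: "continuous_on UNIV H"
    unfolding H_def h_dc_def psi_def
    by (intro continuous_intros CVaR_cont[OF a2])
  have contPhi: "continuous_on UNIV \<Phi>"
    unfolding \<Phi>_def by (intro continuous_intros contG contH)
  have wS: "w k \<in> port_simplex" for k
  proof (induction k)
    case 0 then show ?case using w0 .
  next
    case (Suc k)
    show ?case
    proof (cases "y k = w k")
      case True then show ?thesis using stop Suc by simp
    next
      case False
      have yS: "y k \<in> port_simplex" using y_min by blast
      note li = ls_init_props[OF Suc yS False]
      note lp = ls_iter_props[OF params(3,4) li(2)]
      have st: "w (Suc k) = w k + lam k *\<^sub>R (y k - w k)"
        and lk: "lam k = ls_iter \<beta> (ls_init (w k) (y k - w k)) (LEAST m. \<Phi> (w k + ls_iter \<beta> (ls_init (w k) (y k - w k)) m *\<^sub>R (y k - w k))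
                      \<le> \<Phi> (w k) - \<rho> * (ls_iter \<beta> (ls_init (w k) (y k - w k)) m)^2 * (norm (y k - w k))^2)"
        using step False by auto
      have "w k + lam k *\<^sub>R (y k - w k) \<in> port_simplex"
        by (rule ls_seg[OF Suc li(1)]) (use lp(1,2) lk in \<open>auto intro: order_trans[OF zero_le_one]\<close>)
      then show ?thesis using st by simp
    qed
  qed
  have yS: "y k \<in> port_simplex" for k using y_min by blast
  have part1: "\<Phi> (y k) \<le> \<Phi> (w k) - \<rho> * (norm (y k - w k))^2" for k
  proof -
    define wk yk uk where "wk = w k" and "yk = y k" and "uk = u k"
    have Hs: "H yk \<ge> H wk + uk \<bullet> (yk - wk) + \<rho> / 2 * (norm (yk - wk))^2"
    proof -
      have "psi \<rho> wk + CH wk + uk \<bullet> (yk - wk) + \<rho> / 2 * (norm (yk - wk))^2 \<le> psi \<rho> yk + CH yk"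
      proof (rule sc_core[OF cvxCH params(2)])
        fix t :: real assume t: "0 < t" "t \<le> 1"
        have "H wk + uk \<bullet> ((wk + t *\<^sub>R (yk - wk)) - wk) \<le> H (wk + t *\<^sub>R (yk - wk))"
          using u_sub unfolding subdiff_def wk_def uk_def by blast
        then show "psi \<rho> wk + CH wk + t * (uk \<bullet> (yk - wk)) \<le> psi \<rho> (wk + t *\<^sub>R (yk - wk)) + CH (wk + t *\<^sub>R (yk - wk))"
          unfolding HH by simp
      qed
      then show ?thesis unfolding HH by simp
    qed
    define CGu where "CGu = (\<lambda>v. CG v - v \<bullet> uk)"
    have cvxCGu: "cvx CGu"
    proof -
      have "cvx (\<lambda>v. CG v + (v \<bullet> (- uk) + 0))" by (rule cvx_add[OF cvxCG cvx_lin])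
      then show ?thesis unfolding CGu_def by simp
    qed
    have Gs: "G yk - yk \<bullet> uk + \<rho> / 2 * (norm (wk - yk))^2 \<le> G wk - wk \<bullet> uk"
    proof -
      have "psi \<rho> yk + CGu yk + 0 + \<rho> / 2 * (norm (wk - yk))^2 \<le> psi \<rho> wk + CGu wk"
      proof (rule sc_core[OF cvxCGu params(2)])
        fix t :: real assume t: "0 < t" "t \<le> 1"
        have "yk + t *\<^sub>R (wk - yk) = (1 - t) *\<^sub>R yk + t *\<^sub>R wk" by (simp add: algebra_simps)
        then have "yk + t *\<^sub>R (wk - yk) \<in> port_simplex"
          using simplex_conv[OF yS[of k] wS[of k], of t] t unfolding yk_def wk_def by simp
        then have "G yk - yk \<bullet> uk \<le> G (yk + t *\<^sub>R (wk - yk)) - (yk + t *\<^sub>R (wk - yk)) \<bullet> uk"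
          using y_min unfolding yk_def uk_def by blast
        then show "psi \<rho> yk + CGu yk + t * 0 \<le> psi \<rho> (yk + t *\<^sub>R (wk - yk)) + CGu (yk + t *\<^sub>R (wk - yk))"
          unfolding CGu_def GG by simp
      qed
      then show ?thesis unfolding CGu_def GG by simp
    qed
    have "norm (wk - yk) = norm (yk - wk)" by (rule norm_minus_commute)
    moreover have "uk \<bullet> (yk - wk) = yk \<bullet> uk - wk \<bullet> uk" by (simp add: inner_diff_right inner_commute)
    ultimately have "G yk - H yk \<le> G wk - H wk - \<rho> * (norm (yk - wk))^2" using Hs Gs by simp
    then show ?thesis unfolding \<Phi>_def wk_def yk_def by simp
  qed
  have part2: "(\<exists>m. \<Phi> (w k + ls_iter \<beta> (ls_init (w k) (y k - w k)) m *\<^sub>R (y k - w k))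
                \<le> \<Phi> (w k) - \<rho> * (ls_iter \<beta> (ls_init (w k) (y k - w k)) m)^2 * (norm (y k - w k))^2)
          \<and> \<Phi> (w (Suc k)) \<le> \<Phi> (w k) - \<rho> * (lam k)^2 * (norm (y k - w k))^2 \<and> 1 \<le> lam k"
    if ne: "y k \<noteq> w k" for k
  proof -
    let ?P = "\<lambda>m. \<Phi> (w k + ls_iter \<beta> (ls_init (w k) (y k - w k)) m *\<^sub>R (y k - w k))
                \<le> \<Phi> (w k) - \<rho> * (ls_iter \<beta> (ls_init (w k) (y k - w k)) m)^2 * (norm (y k - w k))^2"
    note li = ls_init_props[OF wS[of k] yS[of k] ne]
    note lp = ls_iter_props[OF params(3,4) li(2)]
    obtain m1 where m1: "ls_iter \<beta> (ls_init (w k) (y k - w k)) m1 = 1" using lp(3) by blast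
    have "?P m1" unfolding m1 using part1[of k] by simp
    then have ex: "\<exists>m. ?P m" by blast
    have st: "w (Suc k) = w k + lam k *\<^sub>R (y k - w k)"
      and lk: "lam k = ls_iter \<beta> (ls_init (w k) (y k - w k)) (LEAST m. ?P m)"
      using step ne by auto
    have "?P (LEAST m. ?P m)" by (rule LeastI_ex[OF ex])
    then have "\<Phi> (w (Suc k)) \<le> \<Phi> (w k) - \<rho> * (lam k)^2 * (norm (y k - w k))^2"
      unfolding st lk .
    moreover have "1 \<le> lam k" unfolding lk by (rule lp(1))
    ultimately show ?thesis using ex by blast
  qed
  have dec1: "\<rho> * (norm (y k - w k))^2 \<le> \<Phi> (w k) - \<Phi> (w (Suc k))" for k
  proof (cases "y k = w k")
    case True then show ?thesis using stop by simp
  next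
    case False
    note q = part2[OF False]
    have "1 \<le> (lam k)^2" using q by (simp add: one_le_power)
    then have "1 * (norm (y k - w k))^2 \<le> (lam k)^2 * (norm (y k - w k))^2" by (intro mult_right_mono) auto
    then have "\<rho> * (norm (y k - w k))^2 \<le> \<rho> * (lam k)^2 * (norm (y k - w k))^2"
      using params(2) by (simp add: mult_le_cancel_left1 mult_right_mono mult.assoc)
    then show ?thesis using q by linarith
  qed
  have decs: "decseq (\<lambda>k. \<Phi> (w k))"
  proof -
    have "\<Phi> (w (Suc k)) \<le> \<Phi> (w k)" for k
      using dec1[of k] params(2) by (smt (verit) mult_nonneg_nonneg zero_le_power2)
    then show ?thesis by (simp add: decseq_Suc_iff)
  qed
  obtain wmin where wmin: "wmin \<in> port_simplex" "\<forall>v\<in>port_simplex. \<Phi> wmin \<le> \<Phi> v"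
    using continuous_attains_inf[OF compact_simplex simplex_nonempty continuous_on_subset[OF contPhi]] by blast
  obtain \<phi>b where lim: "(\<lambda>k. \<Phi> (w k)) \<longlonglongrightarrow> \<phi>b"
    using decseq_convergent[OF decs, of "\<Phi> wmin"] wmin wS by blast
  have dlim: "(\<lambda>k. y k - w k) \<longlonglongrightarrow> 0"
  proof -
    have l1: "(\<lambda>k. (\<Phi> (w k) - \<Phi> (w (Suc k))) / \<rho>) \<longlonglongrightarrow> 0"
      using tendsto_divide[OF tendsto_diff[OF lim LIMSEQ_Suc[OF lim]] tendsto_const[of \<rho>]] params(2) by simp
    have l2: "(\<lambda>k. (norm (y k - w k))^2) \<longlonglongrightarrow> 0"
    proof (rule tendsto_sandwich[OF _ _ tendsto_const l1])
      show "\<forall>\<^sub>F k in sequentially. 0 \<le> (norm (y k - w k))^2" by simp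
      show "\<forall>\<^sub>F k in sequentially. (norm (y k - w k))^2 \<le> (\<Phi> (w k) - \<Phi> (w (Suc k))) / \<rho>"
        using dec1 params(2) by (simp add: le_divide_eq mult.commute)
    qed
    have "(\<lambda>k. sqrt ((norm (y k - w k))^2)) \<longlonglongrightarrow> sqrt 0" by (rule tendsto_real_sqrt[OF l2])
    then have "(\<lambda>k. norm (y k - w k)) \<longlonglongrightarrow> 0" by simp
    then show ?thesis by (simp add: tendsto_norm_zero_iff)
  qed
  define X where "X = (\<Sum>i<S. norm (x i))"
  define M where "M = 2 * \<rho> + \<tau> * ((\<alpha> - \<gamma>) / \<gamma>) * (X / (\<alpha> - \<gamma>))"
  have X0: "0 \<le> X" unfolding X_def by (simp add: sum_nonneg)
  have M0: "0 \<le> M" unfolding M_def using X0 a2 gamma(1) params by simp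
  have ubd: "norm (u k) \<le> M" for k
  proof (cases "u k = 0")
    case True then show ?thesis using M0 by simp
  next
    case False
    define e where "e = (1 / norm (u k)) *\<^sub>R u k"
    define v where "v = w k + e"
    have ne: "norm e = 1" unfolding e_def using False by simp
    have ue: "u k \<bullet> e = norm (u k)" unfolding e_def using False
      by (simp add: power2_norm_eq_inner[symmetric] power2_eq_square)
    have "H (w k) + u k \<bullet> (v - w k) \<le> H v" using u_sub unfolding subdiff_def by blast
    then have h1: "norm (u k) \<le> H v - H (w k)" unfolding v_def using ue by simp
    have nw: "norm (w k) \<le> 1" by (rule norm_simplex[OF wS])
    have "norm v \<le> 2" unfolding v_def using norm_triangle_ineq[of "w k" e] nw ne by simp
    then have "(norm v)^2 \<le> 2^2" by (intro power_mono) auto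
    then have pv: "psi \<rho> v \<le> 2 * \<rho>" unfolding psi_def using params(2) by simp
    have pw: "0 \<le> psi \<rho> (w k)" unfolding psi_def using params(2) by simp
    have "\<bar>CVaR S x p (\<alpha> - \<gamma>) (w k) - CVaR S x p (\<alpha> - \<gamma>) v\<bar> \<le> X / (\<alpha> - \<gamma>) * norm (w k - v)"
      using CVaR_lip[OF a2] unfolding X_def by blast
    also have "norm (w k - v) = 1" unfolding v_def using ne by simp
    finally have cl: "CVaR S x p (\<alpha> - \<gamma>) (w k) - CVaR S x p (\<alpha> - \<gamma>) v \<le> X / (\<alpha> - \<gamma>)" by simp
    have c0: "0 \<le> \<tau> * ((\<alpha> - \<gamma>) / \<gamma>)" using a2 gamma(1) params by simp
    have "H v - H (w k) = psi \<rho> v - psi \<rho> (w k) + \<tau> * ((\<alpha> - \<gamma>) / \<gamma>) * (CVaR S x p (\<alpha> - \<gamma>) (w k) - CVaR S x p (\<alpha> - \<gamma>) v)"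
      unfolding H_def h_dc_def by (simp add: algebra_simps)
    also have "\<dots> \<le> 2 * \<rho> + \<tau> * ((\<alpha> - \<gamma>) / \<gamma>) * (X / (\<alpha> - \<gamma>))"
      using pv pw mult_left_mono[OF cl c0] by linarith
    finally show ?thesis using h1 unfolding M_def by linarith
  qed
  define K :: "((real^'n) \<times> (real^'n)) set" where "K = port_simplex \<times> cball (0::real^'n) M"
  have cK: "compact K" unfolding K_def by (intro compact_Times compact_simplex compact_cball)
  have inK: "(w k, u k) \<in> K" for k unfolding K_def using wS ubd by (simp add: dist_norm)
  obtain l r where lK: "l \<in> K" and r: "strict_mono r" and lr: "((\<lambda>k. (w k, u k)) \<circ> r) \<longlonglongrightarrow> l"
    using compact_imp_seq_compact[OF cK] inK unfolding seq_compact_def by meson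
  define wb where "wb = fst l"
  define ub where "ub = snd l"
  have wbS: "wb \<in> port_simplex" using lK unfolding K_def wb_def by auto
  have wl: "(\<lambda>k. w (r k)) \<longlonglongrightarrow> wb" using tendsto_fst[OF lr] unfolding wb_def by (simp add: comp_def)
  have ul: "(\<lambda>k. u (r k)) \<longlonglongrightarrow> ub" using tendsto_snd[OF lr] unfolding ub_def by (simp add: comp_def)
  have yl: "(\<lambda>k. y (r k)) \<longlonglongrightarrow> wb"
  proof -
    have "(\<lambda>k. y (r k) - w (r k)) \<longlonglongrightarrow> 0" using LIMSEQ_subseq_LIMSEQ[OF dlim r] by (simp add: comp_def)
    from tendsto_add[OF wl this] show ?thesis by simp
  qed
  have Hc: "(\<lambda>k. H (w (r k))) \<longlonglongrightarrow> H wb"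
    by (rule continuous_on_tendsto_compose[OF contH wl]) auto
  have Gc: "(\<lambda>k. G (y (r k))) \<longlonglongrightarrow> G wb"
    by (rule continuous_on_tendsto_compose[OF contG yl]) auto
  have ubH: "ub \<in> subdiff H wb"
    unfolding subdiff_def
  proof (intro CollectI allI)
    fix v
    have L: "(\<lambda>k. H (w (r k)) + u (r k) \<bullet> (v - w (r k))) \<longlonglongrightarrow> H wb + ub \<bullet> (v - wb)"
      by (intro tendsto_intros Hc ul wl)
    show "H wb + ub \<bullet> (v - wb) \<le> H v"
      by (rule LIMSEQ_le_const2[OF L]) (use u_sub in \<open>auto simp: subdiff_def\<close>)
  qed
  have ubG: "\<forall>v\<in>port_simplex. G wb - wb \<bullet> ub \<le> G v - v \<bullet> ub"
  proof
    fix v :: "real^'n" assume v: "v \<in> port_simplex"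
    have L1: "(\<lambda>k. G (y (r k)) - y (r k) \<bullet> u (r k)) \<longlonglongrightarrow> G wb - wb \<bullet> ub"
      by (intro tendsto_intros Gc ul yl)
    have L2: "(\<lambda>k. G v - v \<bullet> u (r k)) \<longlonglongrightarrow> G v - v \<bullet> ub"
      by (intro tendsto_intros ul)
    show "G wb - wb \<bullet> ub \<le> G v - v \<bullet> ub"
      by (rule LIMSEQ_le[OF L1 L2]) (use y_min v in blast)
  qed
  have cvxF: "cvx (\<lambda>v. G v - v \<bullet> ub)"
  proof -
    have "cvx (\<lambda>v. (psi \<rho> v + CG v) + (v \<bullet> (- ub) + 0))"
      by (rule cvx_add[OF cvx_add[OF cvx_psi cvxCG] cvx_lin]) (use params in simp)
    then show ?thesis unfolding GG by simp
  qed
  obtain \<eta> where eta1: "\<forall>v. (G wb - wb \<bullet> ub) + \<eta> \<bullet> (v - wb) \<le> G v - v \<bullet> ub"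
      and eta2: "\<forall>v\<in>port_simplex. 0 \<le> \<eta> \<bullet> (v - wb)"
    using kkt_from_min[OF cvxF wbS ubG] by blast
  obtain \<pi> \<nu> where pn: "\<eta> - \<pi> + \<nu> *\<^sub>R (\<chi> i. 1) = 0" "\<forall>i. 0 \<le> \<pi>$i \<and> \<pi>$i * wb$i = 0"
    using normal_simplex[OF wbS eta2] by blast
  have xiG: "\<eta> + ub \<in> subdiff G wb"
    unfolding subdiff_def
  proof (intro CollectI allI)
    fix v
    have "(G wb - wb \<bullet> ub) + \<eta> \<bullet> (v - wb) \<le> G v - v \<bullet> ub" using eta1 by blast
    moreover have "(\<eta> + ub) \<bullet> (v - wb) = \<eta> \<bullet> (v - wb) + v \<bullet> ub - wb \<bullet> ub"
      by (simp add: inner_add_left inner_diff_right inner_commute[of ub])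
    ultimately show "G wb + (\<eta> + ub) \<bullet> (v - wb) \<le> G v" by linarith
  qed
  have kkt: "is_KKT G H wb"
    unfolding is_KKT_def
  proof (intro exI conjI)
    show "\<eta> + ub \<in> subdiff G wb" by (rule xiG)
    show "ub \<in> subdiff H wb" by (rule ubH)
    show "\<eta> + ub - ub - \<pi> + \<nu> *\<^sub>R (\<chi> i. 1) = 0" using pn(1) by simp
    show "\<forall>i. 0 \<le> \<pi>$i \<and> \<pi>$i * wb$i = 0 \<and> 0 \<le> wb$i" using pn(2) wbS by (simp add: port_simplex_def)
    show "(\<Sum>i\<in>UNIV. wb$i) = 1" using wbS by (simp add: port_simplex_def)
  qed
  have "(w \<circ> r) \<longlonglongrightarrow> wb" using wl by (simp add: comp_def)
  then have p4: "\<exists>r wb. strict_mono r \<and> (w \<circ> r) \<longlonglongrightarrow> wb \<and> is_KKT G H wb" using r kkt by blast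
  show ?thesis
    using part1 part2 decs lim p4 by blast
qed


end
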